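(* Let $X_1,\ldots,X_n$ be independent Bernoulli random variables (each taking values in $\{0,1\}$), let $S=\sum_{i=1}^n X_i$, and let $Z$ be a Poisson random variable with mean $1$, independent of $S$. Assume that $S+Z$ has a unique mode $m_1$, and let $m_0$ be any mode of $S$. Then $$m_0\leq m_1\leq m_0+2.$$
   Context: A mode of a random variable $X$ taking values in $\{0,1,2,\ldots\}$ is any integer $m$ at which the probability mass function $k\mapsto \Pr(X=k)$ attains its maximum. The Bernoulli variables may have arbitrary (possibly different) success probabilities. *)

theory Defs
  imports "HOL-Probability.Probability"
begin

definition is_mode :: "nat pmf \<Rightarrow> nat \<Rightarrow> bool" where
  "is_mode q m \<longleftrightarrow> (\<forall>k. pmf q k \<le> pmf q m)"

definition bernoulli_sum_pmf :: "nat \<Rightarrow> (nat \<Rightarrow> real) \<Rightarrow> nat pmf" where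
  "bernoulli_sum_pmf n p =
     map_pmf (\<lambda>x. \<Sum>i<n. of_bool (x i)) (Pi_pmf {..<n} False (\<lambda>i. bernoulli_pmf (p i)))"

definition indep_sum_pmf :: "nat pmf \<Rightarrow> nat pmf \<Rightarrow> nat pmf" where
  "indep_sum_pmf P Q = bind_pmf P (\<lambda>s. map_pmf (\<lambda>z. s + z) Q)"

end

theory Submission
  imports Defs
begin


definition F :: "(int \<Rightarrow> real) \<Rightarrow> (nat \<Rightarrow> real) \<Rightarrow> nat set \<Rightarrow> int \<Rightarrow> real" where
  "F q p A k = (\<Sum>B\<in>Pow A. (\<Prod>i\<in>B. p i) * (\<Prod>i\<in>A-B. 1 - p i) * q (k - int (card B)))"

lemma F_empty[simp]: "F q p {} k = q k"
  by (simp add: F_def)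

lemma F_insert:
  assumes "finite A" "a \<notin> A"
  shows "F q p (insert a A) k = (1 - p a) * F q p A k + p a * F q p A (k-1)"
proof -
  have disj: "Pow A \<inter> insert a ` Pow A = {}" using assms by auto
  have inj: "inj_on (insert a) (Pow A)" using assms by (auto simp: inj_on_def) 
  have s1: "(\<Sum>B\<in>Pow A. (\<Prod>i\<in>B. p i) * (\<Prod>i\<in>insert a A-B. 1 - p i) * q (k - int (card B)))
      = (1 - p a) * F q p A k"
    unfolding F_def sum_distrib_left
  proof (rule sum.cong[OF refl])
    fix B assume "B \<in> Pow A"
    hence "insert a A - B = insert a (A - B)" "a \<notin> A - B" "finite (A-B)" using assms by auto
    thus "(\<Prod>i\<in>B. p i) * (\<Prod>i\<in>insert a A-B. 1 - p i) * q (k - int (card B)) =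
         (1 - p a) * ((\<Prod>i\<in>B. p i) * (\<Prod>i\<in>A-B. 1 - p i) * q (k - int (card B)))" by simp
  qed
  have s2: "(\<Sum>B\<in>insert a ` Pow A. (\<Prod>i\<in>B. p i) * (\<Prod>i\<in>insert a A-B. 1 - p i) * q (k - int (card B)))
      = p a * F q p A (k-1)"
    unfolding F_def sum_distrib_left sum.reindex[OF inj] o_def
  proof (rule sum.cong[OF refl])
    fix B assume "B \<in> Pow A"
    hence "insert a A - insert a B = A - B" "a \<notin> B" "finite B" using assms by (auto intro: finite_subset)
    thus "(\<Prod>i\<in>insert a B. p i) * (\<Prod>i\<in>insert a A - insert a B. 1 - p i) * q (k - int (card (insert a B))) =
         p a * ((\<Prod>i\<in>B. p i) * (\<Prod>i\<in>A-B. 1 - p i) * q (k - 1 - int (card B)))" 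
      by (simp add: algebra_simps)
  qed
  have fin: "finite (Pow A)" "finite (insert a ` Pow A)" using assms by auto
  have "F q p (insert a A) k = (\<Sum>B\<in>Pow A. (\<Prod>i\<in>B. p i) * (\<Prod>i\<in>insert a A-B. 1 - p i) * q (k - int (card B)))
     + (\<Sum>B\<in>insert a ` Pow A. (\<Prod>i\<in>B. p i) * (\<Prod>i\<in>insert a A-B. 1 - p i) * q (k - int (card B)))"
    unfolding F_def Pow_insert by (rule sum.union_disjoint[OF fin disj])
  then show ?thesis using s1 s2 by simp
qed

definition good_base :: "real \<Rightarrow> (int \<Rightarrow> real) \<Rightarrow> bool" where
  "good_base lam q \<longleftrightarrow> lam \<ge> 0 \<and> (\<forall>k. 0 \<le> q k) \<and> (\<forall>k<0. q k = 0) \<and>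
     (\<forall>i j. i \<le> j \<longrightarrow> q (i-1) * q (j+1) \<le> q i * q j) \<and>
     (\<forall>k. real_of_int (k+1) * q (k+1) = lam * q k)"

definition pr :: "(nat \<Rightarrow> real) \<Rightarrow> nat set \<Rightarrow> bool" where
  "pr p A \<longleftrightarrow> (\<forall>i\<in>A. 0 \<le> p i \<and> p i \<le> 1)"

lemma F_remove:
  assumes "finite A" "a \<in> A"
  shows "F q p A k = (1 - p a) * F q p (A-{a}) k + p a * F q p (A-{a}) (k-1)"
proof -
  have "A = insert a (A - {a})" using assms by auto
  hence "F q p A k = F q p (insert a (A - {a})) k" by simp
  also have "\<dots> = (1 - p a) * F q p (A-{a}) k + p a * F q p (A-{a}) (k-1)"
    using assms by (intro F_insert) auto
  finally show ?thesis .
qed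

lemma F_neg:
  assumes "good_base lam q" "k < 0"
  shows "F q p A k = 0"
  using assms unfolding F_def good_base_def by (intro sum.neutral) auto

lemma F_nn:
  assumes "good_base lam q" "finite A" "pr p A"
  shows "0 \<le> F q p A k"
  using assms(2,3)
proof (induction A arbitrary: k rule: finite_induct)
  case empty thus ?case using assms(1) by (simp add: good_base_def)
next
  case (insert a A)
  hence "pr p A" "0 \<le> p a" "p a \<le> 1" by (auto simp: pr_def)
  with insert show ?case by (simp add: F_insert)
qed

lemma lc_step:
  fixes G :: "int \<Rightarrow> real" and r :: real
  assumes lc: "\<And>i j. i \<le> j \<Longrightarrow> G (i-1) * G (j+1) \<le> G i * G j"
    and r: "0 \<le> r" "r \<le> 1" and "i \<le> j"
  defines "H \<equiv> (\<lambda>x. (1 - r) * G x + r * G (x - 1))"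
  shows "H (i-1) * H (j+1) \<le> H i * H j"
proof -
  have a: "G (i-1) * G (j+1) \<le> G i * G j" using lc \<open>i \<le> j\<close> by blast
  have b: "G (i-2) * G j \<le> G (i-1) * G (j-1)" using lc[of "i-1" "j-1"] \<open>i \<le> j\<close> by simp
  have c: "G (i-2) * G (j+1) \<le> G i * G (j-1)"
  proof (cases "i = j")
    case True
    thus ?thesis using lc[of "i-1" i] by (simp add: mult.commute)
  next
    case False
    hence "i \<le> j - 1" using \<open>i \<le> j\<close> by simp
    have "G (i-2) * G (j+1) \<le> G (i-1) * G j" using lc[of "i-1" j] \<open>i \<le> j\<close> by simp
    also have "\<dots> \<le> G i * G (j-1)" using lc[of i "j-1"] \<open>i \<le> j - 1\<close> by simp
    finally show ?thesis .
  qed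
  have eq: "H i * H j - H (i-1) * H (j+1) =
     (1-r)^2 * (G i * G j - G (i-1) * G (j+1)) + r * (1-r) * (G i * G (j-1) - G (i-2) * G (j+1))
     + r^2 * (G (i-1) * G (j-1) - G (i-2) * G j)"
    unfolding H_def by (simp add: algebra_simps power2_eq_square)
  have "0 \<le> (1-r)^2 * (G i * G j - G (i-1) * G (j+1)) + r * (1-r) * (G i * G (j-1) - G (i-2) * G (j+1))
     + r^2 * (G (i-1) * G (j-1) - G (i-2) * G j)"
    using a b c r by (intro add_nonneg_nonneg mult_nonneg_nonneg) auto
  thus ?thesis using eq by linarith
qed

lemma F_lc:
  assumes "good_base lam q" "finite A" "pr p A"
  shows "i \<le> j \<Longrightarrow> F q p A (i-1) * F q p A (j+1) \<le> F q p A i * F q p A j"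
  using assms(2,3)
proof (induction A arbitrary: i j rule: finite_induct)
  case empty thus ?case using assms(1) by (simp add: good_base_def)
next
  case (insert a A)
  hence "pr p A" "0 \<le> p a" "p a \<le> 1" by (auto simp: pr_def)
  have "(\<lambda>x. (1 - p a) * F q p A x + p a * F q p A (x - 1)) (i-1) * (\<lambda>x. (1 - p a) * F q p A x + p a * F q p A (x - 1)) (j+1)
     \<le> (\<lambda>x. (1 - p a) * F q p A x + p a * F q p A (x - 1)) i * (\<lambda>x. (1 - p a) * F q p A x + p a * F q p A (x - 1)) j"
    by (rule lc_step) (use insert \<open>pr p A\<close> \<open>0 \<le> p a\<close> \<open>p a \<le> 1\<close> in auto)
  thus ?case using insert by (simp add: F_insert)
qed

lemma F_sb:
  assumes "good_base lam q" "finite A"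
  shows "real_of_int (k+1) * F q p A (k+1) = lam * F q p A k + (\<Sum>i\<in>A. p i * F q p (A-{i}) k)"
  using assms(2)
proof (induction A arbitrary: k rule: finite_induct)
  case empty thus ?case using assms(1) by (simp add: good_base_def)
next
  case (insert a A)
  have rem: "\<And>i x. i \<in> A \<Longrightarrow> F q p (insert a A - {i}) x = (1 - p a) * F q p (A - {i}) x + p a * F q p (A-{i}) (x-1)"
  proof -
    fix i x assume "i \<in> A"
    hence "insert a A - {i} = insert a (A - {i})" using insert by auto
    thus "F q p (insert a A - {i}) x = (1 - p a) * F q p (A - {i}) x + p a * F q p (A-{i}) (x-1)"
      using insert by (simp add: F_insert)
  qed
  have s: "(\<Sum>i\<in>insert a A. p i * F q p (insert a A - {i}) k) = p a * F q p A k +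
      (1 - p a) * (\<Sum>i\<in>A. p i * F q p (A-{i}) k) + p a * (\<Sum>i\<in>A. p i * F q p (A-{i}) (k-1))"
  proof -
    have e1: "insert a A - {a} = A" using insert by auto
    have "(\<Sum>i\<in>insert a A. p i * F q p (insert a A - {i}) k) = p a * F q p A k + (\<Sum>i\<in>A. p i * F q p (insert a A - {i}) k)"
      using insert e1 by (simp add: sum.insert)
    also have "(\<Sum>i\<in>A. p i * F q p (insert a A - {i}) k) = (\<Sum>i\<in>A. (1 - p a) * (p i * F q p (A-{i}) k) + p a * (p i * F q p (A-{i}) (k-1)))"
      by (rule sum.cong) (auto simp: rem algebra_simps)
    finally show ?thesis by (simp add: sum.distrib sum_distrib_left)
  qed
  have ih1: "real_of_int (k+1) * F q p A (k+1) = lam * F q p A k + (\<Sum>i\<in>A. p i * F q p (A-{i}) k)"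
    using insert by blast
  have ih2: "real_of_int k * F q p A k = lam * F q p A (k-1) + (\<Sum>i\<in>A. p i * F q p (A-{i}) (k-1))"
    using insert.IH[of "k-1"] by simp
  show ?case
    using insert s ih1 ih2 by (simp add: F_insert algebra_simps)
qed

lemma cross_pure:
  fixes g :: "int \<Rightarrow> real" and m :: int
  assumes nn: "\<And>x. 0 \<le> g x" and lc: "g (m-1) * g (m+1) \<le> g m * g m"
    and rs: "0 \<le> r" "r \<le> s" "s \<le> 1"
    and neg: "(1-r) * (g m - g (m+1)) + r * (g (m-1) - g m) < 0"
  shows "(1-s) * (g m - g (m+1)) + s * (g (m-1) - g m) \<le> 0"
proof (cases "g m - g (m+1) \<ge> 0")
  case True
  have "r * ((g (m-1) - g m) - (g m - g (m+1))) < 0" using neg True by (simp add: algebra_simps)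
  hence "r > 0" "(g (m-1) - g m) - (g m - g (m+1)) < 0"
    using rs by (auto simp: mult_less_0_iff)
  hence "s * ((g (m-1) - g m) - (g m - g (m+1))) \<le> r * ((g (m-1) - g m) - (g m - g (m+1)))"
    using rs by (intro mult_right_mono_neg) auto
  thus ?thesis using neg by (simp add: algebra_simps)
next
  case False
  hence gm: "g m < g (m+1)" by simp
  have "g (m-1) * g (m+1) \<le> g m * g (m+1)"
    using lc mult_left_mono[of "g m" "g (m+1)" "g m"] gm nn[of m] by linarith
  hence "g (m-1) \<le> g m" using gm nn[of m] by (simp add: mult_le_cancel_right)
  hence "s * (g (m-1) - g m) \<le> 0" using rs by (simp add: mult_nonneg_nonpos)
  moreover have "(1-s) * (g m - g (m+1)) \<le> 0" using rs gm by (simp add: mult_nonneg_nonpos)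
  ultimately show ?thesis by linarith
qed

lemma G_main:
  assumes gb: "good_base lam q"
  shows "finite A \<Longrightarrow> pr p A \<Longrightarrow> lam + (\<Sum>i\<in>A. p i) \<le> real_of_int k \<Longrightarrow>
    real_of_int (k+1) * F q p A (k+1) \<le> (lam + (\<Sum>i\<in>A. p i)) * F q p A k"
proof (induction "card A" arbitrary: A k rule: less_induct)
  case less
  note fin = \<open>finite A\<close> and prA = \<open>pr p A\<close>
  define mu where "mu = lam + (\<Sum>i\<in>A. p i)"
  define e where "e i = F q p (A-{i}) (k-1) - F q p (A-{i}) k" for i
  define eZ where "eZ = F q p A (k-1) - F q p A k"
  have lam0: "lam \<ge> 0" using gb by (simp add: good_base_def)
  have pA: "\<And>i. i \<in> A \<Longrightarrow> 0 \<le> p i \<and> p i \<le> 1" using prA by (simp add: pr_def)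
  have prsub: "\<And>B. B \<subseteq> A \<Longrightarrow> pr p B" using prA by (auto simp: pr_def)
  have nnF: "\<And>B x. B \<subseteq> A \<Longrightarrow> 0 \<le> F q p B x" using F_nn[OF gb] fin prsub finite_subset by blast
  have Fi: "\<And>i x. i \<in> A \<Longrightarrow> F q p A x = (1-p i) * F q p (A-{i}) x + p i * F q p (A-{i}) (x-1)"
    using F_remove fin by blast
  have sb1: "real_of_int (k+1) * F q p A (k+1) = lam * F q p A k + (\<Sum>i\<in>A. p i * F q p (A-{i}) k)"
    using F_sb[OF gb fin] by blast
  have sb0: "real_of_int k * F q p A k = lam * F q p A (k-1) + (\<Sum>i\<in>A. p i * F q p (A-{i}) (k-1))"
    using F_sb[OF gb fin, of "k-1"] by simp
  have H: "mu * F q p A k - real_of_int (k+1) * F q p A (k+1) = (\<Sum>i\<in>A. p i^2 * e i)"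
  proof -
    have "mu * F q p A k - real_of_int (k+1) * F q p A (k+1) = (\<Sum>i\<in>A. p i * (F q p A k - F q p (A-{i}) k))"
      unfolding sb1 mu_def by (simp add: algebra_simps sum_distrib_left sum_distrib_right sum_subtractf)
    also have "\<dots> = (\<Sum>i\<in>A. p i^2 * e i)"
      by (rule sum.cong) (auto simp: Fi e_def algebra_simps power2_eq_square)
    finally show ?thesis .
  qed
  have K: "(real_of_int k - mu) * F q p A k = lam * eZ + (\<Sum>i\<in>A. p i * (1 - p i) * e i)"
  proof -
    have "(real_of_int k - mu) * F q p A k = lam * eZ + (\<Sum>i\<in>A. p i * (F q p (A-{i}) (k-1) - F q p A k))"
      unfolding left_diff_distrib sb0 mu_def eZ_def by (simp add: algebra_simps sum_distrib_left sum_distrib_right sum_subtractf)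
    also have "(\<Sum>i\<in>A. p i * (F q p (A-{i}) (k-1) - F q p A k)) = (\<Sum>i\<in>A. p i * (1 - p i) * e i)"
      by (rule sum.cong) (auto simp: Fi e_def algebra_simps)
    finally show ?thesis .
  qed
  have K0: "0 \<le> lam * eZ + (\<Sum>i\<in>A. p i * (1 - p i) * e i)"
    unfolding K[symmetric] using less.prems(3) nnF[of A k] unfolding mu_def by simp
  have cross: "p i < p j" if ij: "i \<in> A" "j \<in> A" "e i < 0" "e j > 0" for i j
  proof (rule ccontr)
    assume "\<not> p i < p j"
    hence le: "p j \<le> p i" by simp
    have "i \<noteq> j" using ij by auto
    define g where "g = F q p (A - {i} - {j})"
    have s1: "A - {i} - {j} \<subseteq> A" by auto
    have gnn: "\<And>x. 0 \<le> g x" unfolding g_def using nnF[OF s1] .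
    have glc: "g (k-1-1) * g (k-1+1) \<le> g (k-1) * g (k-1)"
      unfolding g_def by (rule F_lc[OF gb]) (use fin prsub[OF s1] in auto)
    have Fi': "F q p (A-{i}) x = (1-p j) * g x + p j * g (x-1)" for x
      unfolding g_def using F_remove[of "A-{i}" j q p x] fin ij \<open>i \<noteq> j\<close> by auto
    have Fj': "F q p (A-{j}) x = (1-p i) * g x + p i * g (x-1)" for x
    proof -
      have "A - {i} - {j} = A - {j} - {i}" by auto
      thus ?thesis unfolding g_def using F_remove[of "A-{j}" i q p x] fin ij \<open>i \<noteq> j\<close> by auto
    qed
    have ei: "e i = (1 - p j) * (g (k-1) - g (k-1+1)) + p j * (g (k-1-1) - g (k-1))"
      unfolding e_def Fi' by (simp add: algebra_simps)
    have ej: "e j = (1 - p i) * (g (k-1) - g (k-1+1)) + p i * (g (k-1-1) - g (k-1))"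
      unfolding e_def Fj' by (simp add: algebra_simps)
    have "e j \<le> 0" unfolding ej
      by (rule cross_pure[OF gnn glc, of "p j"]) (use pA ij le ei in auto)
    thus False using ij by simp
  qed
  have crossZ: "eZ \<le> 0" if ij: "i \<in> A" "e i < 0" for i
  proof -
    define g where "g = F q p (A - {i})"
    have s1: "A - {i} \<subseteq> A" by auto
    have gnn: "\<And>x. 0 \<le> g x" unfolding g_def using nnF[OF s1] .
    have glc: "g (k-1-1) * g (k-1+1) \<le> g (k-1) * g (k-1)"
      unfolding g_def by (rule F_lc[OF gb]) (use fin prsub[OF s1] in auto)
    have ei: "e i = (1 - 0) * (g (k-1) - g (k-1+1)) + 0 * (g (k-1-1) - g (k-1))"
      unfolding e_def g_def by simp
    have ez: "eZ = (1 - p i) * (g (k-1) - g (k-1+1)) + p i * (g (k-1-1) - g (k-1))"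
      unfolding eZ_def g_def using Fi[OF ij(1), of k] Fi[OF ij(1), of "k-1"] by (simp add: algebra_simps)
    show ?thesis unfolding ez
      by (rule cross_pure[OF gnn glc, of 0]) (use pA ij ei in auto)
  qed
  show ?case
  proof (cases "\<forall>i\<in>A. e i \<ge> 0")
    case True
    have "0 \<le> (\<Sum>i\<in>A. p i^2 * e i)" using True by (intro sum_nonneg) auto
    thus ?thesis using H unfolding mu_def by linarith
  next
    case False
    define N where "N = {i\<in>A. e i < 0}"
    have Nne: "N \<noteq> {}" and Nfin: "finite N" using False fin unfolding N_def by auto
    define t where "t = Max (p ` N)"
    obtain i0 where i0: "i0 \<in> N" "p i0 = t" unfolding t_def using Nne Nfin
      by (metis (mono_tags, lifting) Max_in empty_is_image finite_imageI imageE)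
    have i0A: "i0 \<in> A" "e i0 < 0" using i0 unfolding N_def by auto
    have t01: "0 \<le> t" "t \<le> 1" using pA[OF i0A(1)] i0 by auto
    have eZ0: "eZ \<le> 0" using crossZ[OF i0A] .
    have pt: "(1 - t) * (p i^2 * e i) \<ge> t * (p i * (1 - p i) * e i)" if iA: "i \<in> A" for i
    proof -
      have id: "(1 - t) * (p i^2 * e i) - t * (p i * (1 - p i) * e i) = p i * ((p i - t) * e i)"
        by (simp add: algebra_simps power2_eq_square)
      have "0 \<le> (p i - t) * e i"
      proof (cases "e i" "0::real" rule: linorder_cases)
        case less
        hence "i \<in> N" using iA unfolding N_def by auto
        hence "p i \<le> t" unfolding t_def using Nfin by auto
        thus ?thesis using less by (simp add: mult_nonpos_nonpos)
      next
        case greater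
        hence "p i0 < p i" using cross[OF i0A(1) iA i0A(2)] by auto
        thus ?thesis using greater i0 by simp
      qed simp
      hence "0 \<le> p i * ((p i - t) * e i)" using pA[OF iA] by simp
      thus ?thesis using id by linarith
    qed
    have "t * (\<Sum>i\<in>A. p i * (1 - p i) * e i) \<le> (1 - t) * (\<Sum>i\<in>A. p i^2 * e i)"
      unfolding sum_distrib_left using pt by (intro sum_mono) auto
    moreover have "0 \<le> t * (\<Sum>i\<in>A. p i * (1 - p i) * e i)"
    proof -
      have "0 \<le> (\<Sum>i\<in>A. p i * (1 - p i) * e i)" using K0 eZ0 lam0
        by (smt (verit) mult_nonneg_nonpos)
      thus ?thesis using t01 by simp
    qed
    ultimately have main: "0 \<le> (1 - t) * (\<Sum>i\<in>A. p i^2 * e i)" by linarith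
    show ?thesis
    proof (cases "t < 1")
      case True
      hence "0 \<le> (\<Sum>i\<in>A. p i^2 * e i)" using main by (simp add: zero_le_mult_iff)
      thus ?thesis using H unfolding mu_def by linarith
    next
      case False
      hence p1: "p i0 = 1" using t01 i0 by simp
      define A' where "A' = A - {i0}"
      have cardlt: "card A' < card A" unfolding A'_def using fin i0A(1) by (rule card_Diff1_less)
      have finA': "finite A'" "pr p A'" unfolding A'_def using fin prsub by auto
      have sumA: "(\<Sum>i\<in>A. p i) = 1 + (\<Sum>i\<in>A'. p i)"
        unfolding A'_def using sum.remove[OF fin i0A(1), of p] p1 by simp
      have sumA'0: "0 \<le> (\<Sum>i\<in>A'. p i)" using finA'(2) by (intro sum_nonneg) (auto simp: pr_def)
      have hyp: "lam + (\<Sum>i\<in>A'. p i) \<le> real_of_int (k-1)"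
        using less.prems(3) sumA by simp
      have IH: "real_of_int (k-1+1) * F q p A' (k-1+1) \<le> (lam + (\<Sum>i\<in>A'. p i)) * F q p A' (k-1)"
        using less.hyps[OF cardlt finA' hyp] .
      have k1: "real_of_int k \<ge> 1" using less.prems(3) sumA lam0 sumA'0 by simp
      have a: "F q p A' (k-1) < F q p A' k" using i0A(2) unfolding e_def A'_def by simp
      have b: "0 \<le> F q p A' (k-1)" unfolding A'_def using nnF by auto
      have "real_of_int k * F q p A' k \<le> (real_of_int k - 1) * F q p A' (k-1)"
        using IH hyp b by (simp add: mult_right_mono) (smt (verit) mult_right_mono)
      also have "\<dots> \<le> (real_of_int k - 1) * F q p A' k" using a k1 by (simp add: mult_left_mono)
      finally have "F q p A' k \<le> 0" by (simp add: algebra_simps)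
      thus ?thesis using a b by simp
    qed
  qed
qed

definition d0 :: "int \<Rightarrow> real" where "d0 k = (if k = 0 then 1 else 0)"
definition po1 :: "int \<Rightarrow> real" where "po1 k = (if k < 0 then 0 else exp (-1) / fact (nat k))"

lemma gb_d0: "good_base 0 d0"
  unfolding good_base_def d0_def by auto

lemma po1_sb: "real_of_int (k+1) * po1 (k+1) = po1 k"
proof (cases "k \<ge> 0")
  case True
  have "nat (k+1) = Suc (nat k)" using True by simp
  hence f: "fact (nat (k+1)) = real_of_int (k+1) * (fact (nat k) :: real)" using True by simp
  have pos: "real_of_int (k+1) > 0" using True by simp
  have "po1 (k+1) = exp (-1) / (real_of_int (k+1) * fact (nat k))" unfolding po1_def f using True by simp
  moreover have "\<And>c x d::real. c > 0 \<Longrightarrow> c * (x / (c * d)) = x / d"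
    by (case_tac "d = 0") (simp_all add: field_simps)
  ultimately have "real_of_int (k+1) * po1 (k+1) = exp (-1) / fact (nat k)" using pos by metis
  thus ?thesis using True unfolding po1_def by simp
next
  case False thus ?thesis unfolding po1_def by auto
qed

lemma po1_nn: "0 \<le> po1 k" unfolding po1_def by auto
lemma po1_neg: "k < 0 \<Longrightarrow> po1 k = 0" unfolding po1_def by auto

lemma gb_po1: "good_base 1 po1"
  unfolding good_base_def
proof (intro conjI allI impI)
  fix i j :: int assume ij: "i \<le> j"
  show "po1 (i - 1) * po1 (j + 1) \<le> po1 i * po1 j"
  proof (cases "i \<le> 0")
    case True thus ?thesis using po1_nn[of i] po1_nn[of j] unfolding po1_def[of "i-1"] by simp
  next
    case False
    have a: "po1 (i-1) = real_of_int i * po1 i" using po1_sb[of "i-1"] by simp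
    have b: "po1 (j+1) * real_of_int (j+1) = po1 j" using po1_sb[of j] by (simp add: mult.commute)
    have jp: "real_of_int (j+1) > 0" using False ij by simp
    have "po1 (i - 1) * po1 (j + 1) * real_of_int (j+1) = real_of_int i * (po1 i * po1 j)"
      using a b by (simp add: algebra_simps)
    also have "\<dots> \<le> real_of_int (j+1) * (po1 i * po1 j)"
      using ij po1_nn[of i] po1_nn[of j] by (intro mult_right_mono) auto
    finally show ?thesis using jp by (simp add: mult.commute)
  qed
next
  fix k :: int show "real_of_int (k + 1) * po1 (k + 1) = 1 * po1 k" using po1_sb[of k] by simp
qed (auto simp: po1_nn po1_neg)

lemma F_flip:
  assumes "finite A"
  shows "F d0 (\<lambda>i. 1 - p i) A k = F d0 p A (int (card A) - k)"
  using assms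
proof (induction A arbitrary: k rule: finite_induct)
  case empty thus ?case by (simp add: d0_def)
next
  case (insert a A)
  have "int (card (insert a A)) - k = int (card A) - (k - 1)" using insert by simp
  thus ?case using insert by (simp add: F_insert algebra_simps)
qed

lemma F_conv:
  assumes "finite A"
  shows "F po1 p A k = (\<Sum>j\<in>{0..k}. po1 j * F d0 p A (k - j))"
  using assms
proof (induction A arbitrary: k rule: finite_induct)
  case empty
  show ?case
  proof (cases "k \<ge> 0")
    case True
    have "(\<Sum>j\<in>{0..k}. po1 j * d0 (k - j)) = (\<Sum>j\<in>{0..k}. if j = k then po1 k else 0)"
      by (rule sum.cong) (auto simp: d0_def)
    thus ?thesis using True by simp
  next
    case False thus ?thesis by (simp add: po1_def)
  qed
next
  case (insert a A)
  have neg: "F d0 p A x = 0" if "x < 0" for x using F_neg[OF gb_d0 that] .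
  have s2: "(\<Sum>j\<in>{0..k}. po1 j * F d0 p A (k - j - 1)) = F po1 p A (k-1)"
  proof (cases "k \<ge> 0")
    case True
    have "{0..k} = insert k {0..k-1}" using True by auto
    hence "(\<Sum>j\<in>{0..k}. po1 j * F d0 p A (k - j - 1)) = (\<Sum>j\<in>{0..k-1}. po1 j * F d0 p A (k - 1 - j))"
      using neg by (simp add: algebra_simps)
    thus ?thesis using insert.IH by simp
  next
    case False
    thus ?thesis using F_neg[OF gb_po1, of "k-1"] by simp
  qed
  have "(\<Sum>j\<in>{0..k}. po1 j * F d0 p (insert a A) (k - j)) =
     (1 - p a) * (\<Sum>j\<in>{0..k}. po1 j * F d0 p A (k - j)) + p a * (\<Sum>j\<in>{0..k}. po1 j * F d0 p A (k - j - 1))"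
  proof -
    have "(\<Sum>j\<in>{0..k}. po1 j * F d0 p (insert a A) (k - j)) =
      (\<Sum>j\<in>{0..k}. (1 - p a) * (po1 j * F d0 p A (k - j)) + p a * (po1 j * F d0 p A (k - j - 1)))"
      by (rule sum.cong) (use insert in \<open>auto simp: F_insert algebra_simps\<close>)
    thus ?thesis by (simp only: sum.distrib sum_distrib_left)
  qed
  thus ?case using insert s2 by (simp add: F_insert)
qed



lemma fun_upd_sum_helper:
  "(\<lambda>y. bind_pmf X (\<lambda>f. return_pmf (\<Sum>i<Suc n. of_bool ((f(n := y)) i)))) =
   (\<lambda>y. bind_pmf X (\<lambda>f. return_pmf ((\<Sum>i<n. of_bool (f i)) + (of_bool y::nat))))"
proof -
  have "\<And>f y. (\<Sum>i<Suc n. of_bool ((f(n := y)) i)) = (\<Sum>i<n. of_bool (f i)) + (of_bool y::nat)"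
  proof -
    fix f y
    have "(\<Sum>i<n. of_bool ((f(n := y)) i)::nat) = (\<Sum>i<n. of_bool (f i))"
      by (rule sum.cong) auto
    thus "(\<Sum>i<Suc n. of_bool ((f(n := y)) i)) = (\<Sum>i<n. of_bool (f i)) + (of_bool y::nat)"
      by (simp only: sum.lessThan_Suc) simp
  qed
  thus ?thesis by simp
qed

lemma bsum_Suc:
  "bernoulli_sum_pmf (Suc n) p =
     bind_pmf (bernoulli_pmf (p n)) (\<lambda>y. map_pmf (\<lambda>s. s + of_bool y) (bernoulli_sum_pmf n p))"
proof -
  have ins: "{..<Suc n} = insert n {..<n}" by auto
  have "bernoulli_sum_pmf (Suc n) p =
     map_pmf (\<lambda>x. \<Sum>i<Suc n. of_bool (x i))
       (bind_pmf (bernoulli_pmf (p n)) (\<lambda>y. bind_pmf (Pi_pmf {..<n} False (\<lambda>i. bernoulli_pmf (p i)))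
           (\<lambda>f. return_pmf (f(n := y)))))"
    unfolding bernoulli_sum_pmf_def ins by (subst Pi_pmf_insert') auto
  also have "\<dots> = bind_pmf (bernoulli_pmf (p n)) (\<lambda>y. bind_pmf (Pi_pmf {..<n} False (\<lambda>i. bernoulli_pmf (p i)))
           (\<lambda>f. return_pmf ((\<Sum>i<n. of_bool (f i)) + of_bool y)))"
    unfolding map_bind_pmf map_return_pmf fun_upd_sum_helper ..
  also have "\<dots> = bind_pmf (bernoulli_pmf (p n)) (\<lambda>y. map_pmf (\<lambda>s. s + of_bool y) (bernoulli_sum_pmf n p))"
    by (simp add: bernoulli_sum_pmf_def map_pmf_def bind_assoc_pmf bind_return_pmf)
  finally show ?thesis .
qed

lemma isum_Suc:
  "indep_sum_pmf (bernoulli_sum_pmf (Suc n) p) Q =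
     bind_pmf (bernoulli_pmf (p n)) (\<lambda>y. map_pmf (\<lambda>s. s + of_bool y) (indep_sum_pmf (bernoulli_sum_pmf n p) Q))"
  unfolding bsum_Suc indep_sum_pmf_def
  apply (simp add: bind_assoc_pmf bind_map_pmf map_bind_pmf map_pmf_comp)
  apply (intro bind_pmf_cong refl map_pmf_cong)
  apply simp
  done

lemma isum_0: "indep_sum_pmf (bernoulli_sum_pmf 0 p) Q = Q"
proof -
  have "map_pmf ((+) (0::nat)) Q = map_pmf id Q" by (rule map_pmf_cong) auto
  thus ?thesis by (simp add: indep_sum_pmf_def bernoulli_sum_pmf_def bind_return_pmf map_pmf_id)
qed

lemma bsum_as_isum: "bernoulli_sum_pmf n p = indep_sum_pmf (bernoulli_sum_pmf n p) (return_pmf 0)"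
  by (simp add: indep_sum_pmf_def bind_return_pmf')

lemma pmf_shift1: "pmf (map_pmf Suc X) k = (if k = 0 then 0 else pmf X (k - 1))"
proof (cases k)
  case 0 thus ?thesis by (auto intro!: pmf_map_outside)
next
  case (Suc m)
  have "pmf (map_pmf Suc X) (Suc m) = pmf X m" by (rule pmf_map_inj') auto
  thus ?thesis using Suc by simp
qed

lemma pmf_isum_Suc:
  assumes "0 \<le> p n" "p n \<le> 1"
  shows "pmf (indep_sum_pmf (bernoulli_sum_pmf (Suc n) p) Q) k =
     (1 - p n) * pmf (indep_sum_pmf (bernoulli_sum_pmf n p) Q) k +
     p n * (if k = 0 then 0 else pmf (indep_sum_pmf (bernoulli_sum_pmf n p) Q) (k - 1))"
  unfolding isum_Suc pmf_bind using assms by (simp add: pmf_shift1 algebra_simps)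



lemma F_negq:
  assumes "\<And>k. k < 0 \<Longrightarrow> q k = 0" "k < 0"
  shows "F q p A k = 0"
  using assms unfolding F_def by (intro sum.neutral) auto

lemma pmf_isum_F:
  assumes "\<And>i. i < n \<Longrightarrow> 0 \<le> p i \<and> p i \<le> 1"
  shows "pmf (indep_sum_pmf (bernoulli_sum_pmf n p) Q) k =
    F (\<lambda>j. if j < 0 then 0 else pmf Q (nat j)) p {..<n} (int k)"
  using assms
proof (induction n arbitrary: k)
  case 0 thus ?case by (simp add: isum_0 F_def)
next
  case (Suc n)
  have pn: "0 \<le> p n" "p n \<le> 1" using Suc.prems by auto
  have ih: "\<And>k. pmf (indep_sum_pmf (bernoulli_sum_pmf n p) Q) k =
    F (\<lambda>j. if j < 0 then 0 else pmf Q (nat j)) p {..<n} (int k)" using Suc by auto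
  have ins: "{..<Suc n} = insert n {..<n}" by auto
  have neg: "F (\<lambda>j. if j < 0 then 0 else pmf Q (nat j)) p {..<n} (-1) = 0"
    by (rule F_negq) auto
  have Fi: "F (\<lambda>j. if j < 0 then 0 else pmf Q (nat j)) p {..<Suc n} x =
     (1 - p n) * F (\<lambda>j. if j < 0 then 0 else pmf Q (nat j)) p {..<n} x
     + p n * F (\<lambda>j. if j < 0 then 0 else pmf Q (nat j)) p {..<n} (x-1)" for x
    unfolding ins by (rule F_insert) auto
  show ?case
    unfolding pmf_isum_Suc[of p n, OF pn] Fi
    using ih neg by (cases k) (auto simp: of_nat_diff)
qed

lemma pmf_S: 
  assumes "\<And>i. i < n \<Longrightarrow> 0 \<le> p i \<and> p i \<le> 1"
  shows "pmf (bernoulli_sum_pmf n p) k = F d0 p {..<n} (int k)"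
proof -
  have "(\<lambda>j. if j < 0 then 0 else pmf (return_pmf (0::nat)) (nat j)) = d0"
    by (auto simp: d0_def fun_eq_iff pmf_return)
  moreover have "pmf (bernoulli_sum_pmf n p) k = pmf (indep_sum_pmf (bernoulli_sum_pmf n p) (return_pmf 0)) k"
    using bsum_as_isum[of n p] by (rule arg_cong)
  moreover have "\<dots> = F (\<lambda>j. if j < 0 then 0 else pmf (return_pmf (0::nat)) (nat j)) p {..<n} (int k)"
    by (rule pmf_isum_F[OF assms])
  ultimately show ?thesis by simp
qed

lemma pmf_T: 
  assumes "\<And>i. i < n \<Longrightarrow> 0 \<le> p i \<and> p i \<le> 1"
  shows "pmf (indep_sum_pmf (bernoulli_sum_pmf n p) (poisson_pmf 1)) k = F po1 p {..<n} (int k)"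
proof -
  have "(\<lambda>j. if j < 0 then 0 else pmf (poisson_pmf 1) (nat j)) = po1"
    by (auto simp: po1_def fun_eq_iff pmf_poisson)
  moreover have "pmf (indep_sum_pmf (bernoulli_sum_pmf n p) (poisson_pmf 1)) k = F (\<lambda>j. if j < 0 then 0 else pmf (poisson_pmf 1) (nat j)) p {..<n} (int k)"
    by (rule pmf_isum_F[OF assms])
  ultimately show ?thesis by simp
qed



theorem proposition1:
  fixes n :: nat and p :: "nat \<Rightarrow> real" and m0 m1 :: nat
  assumes "\<And>i. i < n \<Longrightarrow> 0 \<le> p i \<and> p i \<le> 1"
    and "is_mode (indep_sum_pmf (bernoulli_sum_pmf n p) (poisson_pmf 1)) m1"
    and "\<And>m. is_mode (indep_sum_pmf (bernoulli_sum_pmf n p) (poisson_pmf 1)) m \<Longrightarrow> m = m1"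
    and "is_mode (bernoulli_sum_pmf n p) m0"
  shows "m0 \<le> m1 \<and> m1 \<le> m0 + 2"
proof -
  define A where "A = {..<n}"
  define mu where "mu = (\<Sum>i\<in>A. p i)"
  define f where "f = F d0 p A"
  define g where "g = F po1 p A"
  have finA: "finite A" and cardA: "card A = n" unfolding A_def by auto
  have prA: "pr p A" using assms(1) unfolding A_def pr_def by auto
  have pS: "\<And>k. pmf (bernoulli_sum_pmf n p) k = f (int k)" unfolding f_def A_def using pmf_S[where n=n and p=p, OF assms(1)] by blast
  have pT: "\<And>k. pmf (indep_sum_pmf (bernoulli_sum_pmf n p) (poisson_pmf 1)) k = g (int k)"
    unfolding g_def A_def using pmf_T[where n=n and p=p, OF assms(1)] by blast
  have modeT: "is_mode (indep_sum_pmf (bernoulli_sum_pmf n p) (poisson_pmf 1)) m \<longleftrightarrow> (\<forall>k::nat. g k \<le> g m)" for m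
    unfolding is_mode_def pT ..
  have hm0: "\<And>k::nat. f k \<le> f m0" using assms(4) unfolding is_mode_def pS by blast
  have uniq: "m = m1" if "\<forall>k::nat. g k \<le> g m" for m :: nat
  proof -
    have "is_mode (indep_sum_pmf (bernoulli_sum_pmf n p) (poisson_pmf 1)) m" using that modeT by simp
    thus ?thesis by (rule assms(3))
  qed
  have hm1: "\<And>k::nat. g k \<le> g m1" using assms(2) modeT by simp
  have fnn: "\<And>x. 0 \<le> f x" unfolding f_def using F_nn[OF gb_d0 finA prA] .
  have fneg: "\<And>x. x < 0 \<Longrightarrow> f x = 0" unfolding f_def using F_neg[OF gb_d0] .
  have f0: "f m0 > 0"
  proof -
    obtain x where "x \<in> set_pmf (bernoulli_sum_pmf n p)" using set_pmf_not_empty[of "bernoulli_sum_pmf n p"] by blast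
    hence "0 < f x" using pmf_positive pS by metis
    thus ?thesis using hm0[of x] by linarith
  qed
  have pA: "\<And>i. i \<in> A \<Longrightarrow> 0 \<le> p i \<and> p i \<le> 1" using prA unfolding pr_def by auto
  have mu0: "0 \<le> mu" unfolding mu_def using pA by (intro sum_nonneg) auto
  have mun: "mu \<le> n"
  proof -
    have "mu \<le> (\<Sum>i\<in>A. 1)" unfolding mu_def using pA by (intro sum_mono) auto
    thus ?thesis using cardA by simp
  qed
  have Gf: "\<And>k. mu \<le> real_of_int k \<Longrightarrow> real_of_int (k+1) * f (k+1) \<le> mu * f k"
    using G_main[OF gb_d0 finA prA] unfolding f_def mu_def by simp
  have Gg: "\<And>k. 1 + mu \<le> real_of_int k \<Longrightarrow> real_of_int (k+1) * g (k+1) \<le> (1 + mu) * g k"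
    using G_main[OF gb_po1 finA prA] unfolding g_def mu_def by simp
  have flipG: "real_of_int (int n - k) * f k \<le> (n - mu) * f (k+1)" if hk: "real_of_int k + 1 \<le> mu" for k
  proof -
    define p' where "p' = (\<lambda>i. 1 - p i)"
    have prA': "pr p' A" using pA unfolding pr_def p'_def by auto
    have s': "(\<Sum>i\<in>A. p' i) = n - mu" unfolding p'_def mu_def using cardA by (simp add: sum_subtractf)
    have fl: "\<And>x. F d0 p' A x = f (int n - x)" unfolding p'_def f_def using F_flip[OF finA] cardA by simp
    have "real_of_int (int n - k - 1 + 1) * F d0 p' A (int n - k - 1 + 1) \<le> (0 + (\<Sum>i\<in>A. p' i)) * F d0 p' A (int n - k - 1)"
      by (rule G_main[OF gb_d0 finA prA']) (use s' hk in simp)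
    thus ?thesis unfolding fl s' by simp
  qed
  have b: "real m0 - 1 < mu"
  proof (rule ccontr)
    assume "\<not> real m0 - 1 < mu"
    hence h: "mu \<le> real_of_int (int m0 - 1)" by simp
    have "real_of_int (int m0 - 1 + 1) * f (int m0 - 1 + 1) \<le> mu * f (int m0 - 1)" using Gf[OF h] .
    hence "real m0 * f m0 \<le> mu * f (int m0 - 1)" by simp
    also have "\<dots> \<le> (real m0 - 1) * f (int m0 - 1)" using h fnn by (intro mult_right_mono) auto
    also have "\<dots> \<le> (real m0 - 1) * f m0"
    proof (cases "m0 = 0")
      case True
      hence "mu \<le> -1" using h by simp
      thus ?thesis using mu0 by linarith
    next
      case False
      hence eq: "int m0 - 1 = int (m0 - 1)" by simp
      have "f (int m0 - 1) = f (int (m0 - 1))" by (simp only: eq)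
      hence "f (int m0 - 1) \<le> f m0" using hm0[of "m0-1"] by linarith
      thus ?thesis using False by (intro mult_left_mono) auto
    qed
    finally show False using f0 by (simp add: algebra_simps)
  qed
  have c: "mu < real m0 + 1"
  proof (rule ccontr)
    assume "\<not> mu < real m0 + 1"
    hence h: "real_of_int (int m0) + 1 \<le> mu" by simp
    have "real_of_int (int n - int m0) * f m0 \<le> (n - mu) * f (int m0 + 1)" using flipG[OF h] .
    also have "\<dots> \<le> (real n - real m0 - 1) * f (int m0 + 1)" using h fnn by (intro mult_right_mono) auto
    also have "\<dots> \<le> (real n - real m0 - 1) * f m0"
    proof -
      have "f (int m0 + 1) \<le> f m0" using hm0[of "m0+1"] by (simp add: add.commute)
      moreover have "real n - real m0 - 1 \<ge> 0" using h mun by simp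
      ultimately show ?thesis by (intro mult_left_mono) auto
    qed
    finally have "real_of_int (int n - int m0) * f m0 \<le> (real n - real m0 - 1) * f m0" .
    hence "f m0 \<le> 0" by (simp add: algebra_simps)
    thus False using f0 by simp
  qed
  have d: "f x \<le> f (x+1)" if hx: "0 \<le> x" "x < int m0" for x
  proof (cases "real_of_int x + 1 \<le> mu")
    case True
    have "real_of_int (int n - x) * f x \<le> (n - mu) * f (x+1)" using flipG[OF True] .
    also have "\<dots> \<le> real_of_int (int n - x) * f (x+1)" using True fnn by (intro mult_right_mono) auto
    finally show ?thesis using True mun by (simp add: mult_le_cancel_left)
  next
    case False
    hence "real_of_int (x + 1) > real_of_int (int m0 - 1)" using b by simp
    hence "x + 1 > int m0 - 1" by (simp only: of_int_less_iff)
    hence "x + 1 = int m0" using hx by linarith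
    thus ?thesis using hm0[of "nat x"] hx by simp
  qed
  have e: "g k \<le> g (k+1)" if hk: "0 \<le> k" "k < int m0" for k
  proof -
    have ins: "{0..k+1} = insert (k+1) {0..k}" using hk by auto
    have "g k = (\<Sum>j\<in>{0..k}. po1 j * f (k - j))" unfolding g_def f_def by (rule F_conv[OF finA])
    also have "\<dots> \<le> (\<Sum>j\<in>{0..k}. po1 j * f (k + 1 - j))"
    proof (rule sum_mono)
      fix j assume "j \<in> {0..k}"
      hence "f (k - j) \<le> f (k - j + 1)" using d hk by auto
      thus "po1 j * f (k - j) \<le> po1 j * f (k + 1 - j)" using po1_nn by (simp add: mult_left_mono algebra_simps)
    qed
    also have "\<dots> \<le> po1 (k+1) * f (k + 1 - (k+1)) + (\<Sum>j\<in>{0..k}. po1 j * f (k + 1 - j))"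
      using po1_nn fnn by simp
    also have "\<dots> = g (k+1)" unfolding g_def f_def F_conv[OF finA, of p "k+1"] ins by simp
    finally show ?thesis .
  qed
  have gnn: "\<And>x. 0 \<le> g x" unfolding g_def using F_nn[OF gb_po1 finA prA] .
  have ff: "g (k+1) \<le> g k" if hk: "int m0 + 2 \<le> k" for k
  proof -
    have h: "1 + mu \<le> real_of_int k" using hk c by linarith
    have "real_of_int (k+1) * g (k+1) \<le> (1 + mu) * g k" using Gg[OF h] .
    also have "\<dots> \<le> real_of_int (k+1) * g k" using h gnn by (intro mult_right_mono) auto
    finally show ?thesis using hk by (simp add: mult_le_cancel_left)
  qed
  have up: "g (int k) \<le> g (int m0)" if "k \<le> m0" for k
    using that
  proof (induction k rule: inc_induct)
    case base thus ?case by simp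
  next
    case (step k)
    have "g (int k) \<le> g (int k + 1)" using e step by simp
    moreover have "g (int (Suc k)) \<le> g (int m0)" using step.IH .
    moreover have "int (Suc k) = int k + 1" by simp
    ultimately show ?case by (metis order_trans)
  qed
  have down: "g (int k) \<le> g (int (m0+2))" if "m0 + 2 \<le> k" for k
    using that
  proof (induction k rule: dec_induct)
    case base thus ?case by simp
  next
    case (step k)
    have "g (int k + 1) \<le> g (int k)" using ff step by simp
    moreover have "g (int k) \<le> g (int (m0+2))" using step.IH .
    moreover have "int (Suc k) = int k + 1" by simp
    ultimately show ?case by (metis order_trans)
  qed
  have "m0 \<le> m1"
  proof (rule ccontr)
    assume "\<not> m0 \<le> m1"
    hence "g m1 \<le> g m0" using up by simp
    hence "\<forall>k::nat. g k \<le> g m0" using hm1 by (meson order_trans)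
    hence "m0 = m1" by (rule uniq)
    thus False using \<open>\<not> m0 \<le> m1\<close> by simp
  qed
  moreover have "m1 \<le> m0 + 2"
  proof (rule ccontr)
    assume "\<not> m1 \<le> m0 + 2"
    hence "g m1 \<le> g (int (m0+2))" using down by simp
    hence "\<forall>k::nat. g k \<le> g (int (m0+2))" using hm1 by (meson order_trans)
    hence "m0 + 2 = m1" using uniq by simp
    thus False using \<open>\<not> m1 \<le> m0 + 2\<close> by simp
  qed
  ultimately show ?thesis by simp
qed

end
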